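(* Let ${\mathbf{w}}\in\mathbb{R}^d$, let $\boldsymbol{\Sigma}_1$ be a $d\times d$ covariance matrix, and let ${\boldsymbol{\mu}}_{\min}\le{\boldsymbol{\mu}}_{\max}$ be vectors in $\mathbb{R}^d$. Consider $$\max_{{\boldsymbol{\mu}}_1}\ \mathbb{E}_{{\mathbf{x}}\sim N({\boldsymbol{\mu}}_1,\boldsymbol{\Sigma}_1)}\big[-\log\big(\sigma({\mathbf{w}}^T{\mathbf{x}})\big)\big]\quad\text{s.t.}\quad {\boldsymbol{\mu}}_{\min}\le{\boldsymbol{\mu}}_1\le{\boldsymbol{\mu}}_{\max}.$$ Then an optimal solution ${\boldsymbol{\mu}}_1^*$ has the form ${\boldsymbol{\mu}}_1^*[i]={\boldsymbol{\mu}}_{\max}[i]$ if ${\mathbf{w}}[i]\le0$ and ${\boldsymbol{\mu}}_1^*[i]={\boldsymbol{\mu}}_{\min}[i]$ if ${\mathbf{w}}[i]>0$, for each $i=1,\dots,d$.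
   Context: $\sigma(t)=1/(1+e^{-t})$ is the logistic sigmoid; ${\mathbf{a}}[i]$ denotes the $i$-th entry of a vector ${\mathbf{a}}$; vector inequalities are entrywise. *)

theory Defs
  imports "HOL-Probability.Probability"
begin

definition sigmoid :: "real \<Rightarrow> real" where
  "sigmoid t = 1 / (1 + exp (- t))"

definition covariance_matrix :: "real^'d^'d \<Rightarrow> bool" where
  "covariance_matrix S \<longleftrightarrow> transpose S = S \<and> (\<forall>v. 0 \<le> v \<bullet> (S *v v))"

definition std_mvnormal :: "(real^'d) measure" where
  "std_mvnormal = density lborel (\<lambda>z. ennreal (\<Prod>i\<in>UNIV. std_normal_density (z $ i)))"

text \<open>Multivariate normal N(mu, S): law of mu + A z with z standard normal and A A^T = S
  (the law does not depend on the choice of A; this also covers degenerate S).\<close>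
definition mvnormal :: "real^'d \<Rightarrow> real^'d^'d \<Rightarrow> (real^'d) measure" where
  "mvnormal mu S = (let A = (SOME A :: real^'d^'d. A ** transpose A = S)
                    in distr std_mvnormal borel (\<lambda>z. mu + A *v z))"

end

theory Submission
  imports Defs
begin

lemma nn_integral_vec_prod:
  fixes g :: "'d::finite \<Rightarrow> real \<Rightarrow> real"
  assumes [measurable]: "\<And>i. g i \<in> borel_measurable borel" and nn: "\<And>i x. 0 \<le> g i x"
  shows "(\<integral>\<^sup>+z. ennreal (\<Prod>i\<in>UNIV. g i (z $ i)) \<partial>lborel) = (\<Prod>i\<in>UNIV. \<integral>\<^sup>+x. ennreal (g i x) \<partial>lborel)"
proof -
  define f where "f b x = ennreal (g (THE i. b = axis i (1::real)) x)" for b :: "real^'d" and x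
  have B: "(Basis :: (real^'d) set) = range (\<lambda>i. axis i 1)"
    by (auto simp: Basis_vec_def)
  have inj: "inj (\<lambda>i::'d. axis i (1::real))"
    by (auto simp: inj_def axis_eq_axis)
  have th: "(THE i. axis j (1::real) = axis i 1) = j" for j :: 'd
    by (auto simp: axis_eq_axis)
  have "(\<integral>\<^sup>+z. (\<Prod>b\<in>Basis. f b (z \<bullet> b)) \<partial>lborel) = (\<Prod>b\<in>Basis. (\<integral>\<^sup>+x. f b x \<partial>lborel))"
    by (rule nn_integral_lborel_prod) (auto simp: f_def B th)
  also have "(\<Prod>b\<in>Basis. (\<integral>\<^sup>+x. f b x \<partial>lborel)) = (\<Prod>i\<in>UNIV. \<integral>\<^sup>+x. ennreal (g i x) \<partial>lborel)"
    unfolding B by (subst prod.reindex[OF inj]) (simp add: f_def[abs_def] th)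
  also have "(\<lambda>z. (\<Prod>b\<in>Basis. f b (z \<bullet> b))) = (\<lambda>z::real^'d. ennreal (\<Prod>i\<in>UNIV. g i (z $ i)))"
    unfolding B by (subst prod.reindex[OF inj]) (simp add: f_def th prod_ennreal nn cart_eq_inner_axis)
  finally show ?thesis .
qed

lemma std_mvnormal_prob: "prob_space (std_mvnormal :: (real^'d::finite) measure)"
proof (rule prob_spaceI)
  have n1: "(\<integral>\<^sup>+x. ennreal (std_normal_density x) \<partial>lborel) = 1"
  proof -
    have i: "integrable lborel std_normal_density"
      using integrable_std_normal_moment[of 0] by simp
    have "integral\<^sup>L lborel std_normal_density = 1"
      using integral_std_normal_moment_even[of 0] by simp
    then show ?thesis using i by (simp add: nn_integral_eq_integral)
  qed
  show "emeasure (std_mvnormal :: (real^'d) measure) (space std_mvnormal) = 1"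
    unfolding std_mvnormal_def
    by (simp add: emeasure_density nn_integral_vec_prod[where g="\<lambda>i. std_normal_density"] n1)
qed

lemma std_mvnormal_integrable_comp:
  fixes k :: "'d::finite"
  shows "integrable (std_mvnormal :: (real^'d) measure) (\<lambda>z. z $ k)"
proof -
  let ?g = "\<lambda>i x. std_normal_density x * \<bar>x\<bar> ^ (if i = k then 1 else 0)"
  have fin: "(\<integral>\<^sup>+x. ennreal (?g i x) \<partial>lborel) < \<infinity>" for i
    using integrable_std_normal_moment_abs[of "if i = k then 1 else 0"]
    by (simp add: integrable_iff_bounded)
  have eq: "ennreal (\<Prod>i\<in>UNIV. std_normal_density (z $ i)) * ennreal \<bar>z $ k\<bar> =
        ennreal (\<Prod>i\<in>UNIV. ?g i (z $ i))" for z :: "real^'d"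
  proof -
    have "(\<Prod>i\<in>UNIV. ?g i (z $ i)) = (\<Prod>i\<in>UNIV. std_normal_density (z $ i)) * (\<Prod>i\<in>UNIV. \<bar>z $ i\<bar> ^ (if i = k then 1 else 0))"
      by (simp add: prod.distrib)
    also have "(\<Prod>i\<in>UNIV. \<bar>z $ i\<bar> ^ (if i = k then 1 else 0)) = \<bar>z $ k\<bar>"
      by (simp add: if_distrib prod.delta' cong: if_cong)
    finally show ?thesis by (simp add: ennreal_mult prod_nonneg)
  qed
  have "(\<integral>\<^sup>+z. ennreal (norm (z $ k)) \<partial>std_mvnormal) =
        (\<integral>\<^sup>+z. ennreal (\<Prod>i\<in>UNIV. ?g i (z $ i)) \<partial>(lborel :: (real^'d) measure))"
    unfolding std_mvnormal_def
    by (subst nn_integral_density) (simp_all add: eq)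
  also have "\<dots> = (\<Prod>i\<in>UNIV. \<integral>\<^sup>+x. ennreal (?g i x) \<partial>lborel)"
    by (rule nn_integral_vec_prod) auto
  also have "\<dots> < \<infinity>"
    using fin by (simp add: less_top[symmetric] ennreal_prod_eq_top)
  finally show ?thesis
    by (subst integrable_iff_bounded) (simp add: std_mvnormal_def)
qed

lemma negln_sigmoid: "- ln (sigmoid t) = ln (1 + exp (- t))"
  by (simp add: sigmoid_def ln_div add_pos_pos)

lemma negln_sigmoid_mono: "a \<le> b \<Longrightarrow> - ln (sigmoid b) \<le> - ln (sigmoid a)"
  by (simp add: negln_sigmoid add_pos_pos)

lemma negln_sigmoid_nonneg: "0 \<le> - ln (sigmoid t)"
  by (simp add: negln_sigmoid add_pos_pos)

lemma negln_sigmoid_bound: "- ln (sigmoid t) \<le> 1 + \<bar>t\<bar>"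
proof -
  have e2: "2 \<le> exp (1::real)" using exp_ge_add_one_self[of 1] by simp
  have a: "exp (- t) \<le> exp \<bar>t\<bar>" by simp
  have b: "1 \<le> exp \<bar>t\<bar>" by simp
  have "1 + exp (- t) \<le> 2 * exp \<bar>t\<bar>" using a b by linarith
  also have "\<dots> \<le> exp 1 * exp \<bar>t\<bar>" using e2 by (intro mult_right_mono) auto
  also have "\<dots> = exp (1 + \<bar>t\<bar>)" by (simp add: exp_add)
  finally have "ln (1 + exp (- t)) \<le> ln (exp (1 + \<bar>t\<bar>))"
    by (subst ln_le_cancel_iff) (auto simp: add_pos_pos)
  then show ?thesis by (simp add: negln_sigmoid)
qed

lemma sigmoid_meas[measurable]: "sigmoid \<in> borel_measurable borel"
  unfolding sigmoid_def[abs_def] by measurable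

lemma inner_mat_lin: "(w::real^'d::finite) \<bullet> (A *v z) = (\<Sum>j\<in>UNIV. (\<Sum>i\<in>UNIV. w$i * A$i$j) * z$j)"
  by (simp add: inner_vec_def matrix_vector_mult_def sum_distrib_left sum_distrib_right mult.assoc)
     (rule sum.swap)

theorem theorem5:
  fixes w mu_min mu_max :: "real^'d" and Sigma1 :: "real^'d^'d"
  assumes "covariance_matrix Sigma1"
    and "\<forall>i. mu_min $ i \<le> mu_max $ i"
  defines "mu_star \<equiv> (\<chi> i. if w $ i \<le> 0 then mu_max $ i else mu_min $ i)"
  shows "(\<forall>i. mu_min $ i \<le> mu_star $ i \<and> mu_star $ i \<le> mu_max $ i) \<and>
         (\<forall>mu1. (\<forall>i. mu_min $ i \<le> mu1 $ i \<and> mu1 $ i \<le> mu_max $ i) \<longrightarrow>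
            (\<integral>x. - ln (sigmoid (w \<bullet> x)) \<partial>mvnormal mu1 Sigma1)
              \<le> (\<integral>x. - ln (sigmoid (w \<bullet> x)) \<partial>mvnormal mu_star Sigma1))"
proof (intro conjI allI impI)
  fix i show "mu_min $ i \<le> mu_star $ i" "mu_star $ i \<le> mu_max $ i"
    using assms(2) by (auto simp: mu_star_def)
next
  fix mu1 :: "real^'d"
  assume mu1: "\<forall>i. mu_min $ i \<le> mu1 $ i \<and> mu1 $ i \<le> mu_max $ i"
  define A where "A = (SOME A :: real^'d^'d. A ** transpose A = Sigma1)"
  let ?N = "std_mvnormal :: (real^'d) measure"
  interpret N: prob_space ?N by (rule std_mvnormal_prob)
  have sN: "sets ?N = sets borel" by (simp add: std_mvnormal_def)
  have mv: "mvnormal mu Sigma1 = distr ?N borel (\<lambda>z. mu + A *v z)" for mu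
    by (simp add: mvnormal_def A_def Let_def)
  define F where "F = (\<lambda>x::real^'d. - ln (sigmoid (w \<bullet> x)))"
  have Fm: "F \<in> borel_measurable borel" unfolding F_def by measurable
  have gm: "(\<lambda>z. mu + A *v z) \<in> measurable ?N borel" for mu
  proof -
    have "(\<lambda>z. mu + A *v z) \<in> borel_measurable borel"
      by (intro borel_measurable_continuous_onI continuous_intros)
    then show ?thesis using measurable_cong_sets[OF sN refl] by blast
  qed
  have ieq: "(\<integral>x. F x \<partial>mvnormal mu Sigma1) = (\<integral>z. F (mu + A *v z) \<partial>?N)" for mu
    by (simp add: mv integral_distr[OF gm Fm])
  define L where "L = (\<lambda>z. w \<bullet> (A *v z))"
  have Lint: "integrable ?N L"
  proof -
    have "integrable ?N (\<lambda>z. \<Sum>j\<in>UNIV. (\<Sum>i\<in>UNIV. w$i * A$i$j) * z$j)"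
    proof (rule Bochner_Integration.integrable_sum)
      fix j :: 'd
      show "integrable ?N (\<lambda>z. (\<Sum>i\<in>UNIV. w$i * A$i$j) * z$j)"
        using std_mvnormal_integrable_comp[of j] by (rule Bochner_Integration.integrable_mult_right)
    qed
    then show ?thesis unfolding L_def inner_mat_lin .
  qed
  have Lm: "L \<in> borel_measurable ?N" using Lint by auto
  have FL: "F (mu + A *v z) = - ln (sigmoid (w \<bullet> mu + L z))" for mu z
    by (simp add: F_def L_def inner_add_right)
  have Gint: "integrable ?N (\<lambda>z. F (mu + A *v z))" for mu
  proof (rule Bochner_Integration.integrable_bound)
    show "integrable ?N (\<lambda>z. 1 + \<bar>w \<bullet> mu\<bar> + \<bar>L z\<bar>)"
      using Lint by (intro Bochner_Integration.integrable_add Bochner_Integration.integrable_abs) auto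
    show "(\<lambda>z. F (mu + A *v z)) \<in> borel_measurable ?N"
      using measurable_comp[OF gm Fm] by (simp add: o_def)
    show "AE z in ?N. norm (F (mu + A *v z)) \<le> norm (1 + \<bar>w \<bullet> mu\<bar> + \<bar>L z\<bar>)"
    proof (intro AE_I2)
      fix z
      have "\<bar>F (mu + A *v z)\<bar> \<le> 1 + \<bar>w \<bullet> mu + L z\<bar>"
        unfolding FL using negln_sigmoid_nonneg negln_sigmoid_bound by (simp add: abs_of_nonneg)
      then show "norm (F (mu + A *v z)) \<le> norm (1 + \<bar>w \<bullet> mu\<bar> + \<bar>L z\<bar>)"
        by simp
    qed
  qed
  have dot: "w \<bullet> mu_star \<le> w \<bullet> mu1"
    unfolding inner_vec_def
  proof (rule sum_mono)
    fix i
    show "w $ i \<bullet> mu_star $ i \<le> w $ i \<bullet> mu1 $ i"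
      using mu1 by (auto simp: mu_star_def intro: mult_left_mono_neg mult_left_mono)
  qed
  have "(\<integral>z. F (mu1 + A *v z) \<partial>?N) \<le> (\<integral>z. F (mu_star + A *v z) \<partial>?N)"
  proof (rule Bochner_Integration.integral_mono[OF Gint Gint])
    fix z
    show "F (mu1 + A *v z) \<le> F (mu_star + A *v z)"
      unfolding FL by (rule negln_sigmoid_mono) (use dot in simp)
  qed
  then show "(\<integral>x. - ln (sigmoid (w \<bullet> x)) \<partial>mvnormal mu1 Sigma1)
              \<le> (\<integral>x. - ln (sigmoid (w \<bullet> x)) \<partial>mvnormal mu_star Sigma1)"
    using ieq[of mu1] ieq[of mu_star] by (simp add: F_def)
qed

end
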